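(* Let $m\ge1$, let $\mathcal{I}\subseteq\mathcal{M}_m$ be a decreasing monomial set with $r=\max_{f\in\mathcal{I}}\deg f$, and let $f,g,f^*,g^*\in\mathcal{I}_r$ with $\{f,g\}\neq\{f^*,g^*\}$ such that $h=\gcd(f,g)$ and $h^*=\gcd(f^*,g^* )$ satisfy $\deg(h)=\deg(h^* )=r-2$. Then the sets \[ {\rm LTA}(m,2)_h\cdot h\cdot\Big({\rm LTA}(m,2)_{f} \cdot \tfrac{f}{h}+{\rm LTA}(m,2)_{g}\cdot \tfrac{g}{h}\Big)\quad\text{and}\quad {\rm LTA}(m,2)_{h^*}\cdot h^*\cdot\Big({\rm LTA}(m,2)_{f^*} \cdot \tfrac{f^*}{h^*}+{\rm LTA}(m,2)_{g^*}\cdot \tfrac{g^*}{h^*}\Big) \] are disjoint.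
   Context: $\mathbf{R}_m=\mathbb{F}_2[x_0,\dots,x_{m-1}]/(x_0^2-x_0,\dots,x_{m-1}^2-x_{m-1})$. $\mathcal{M}_m$ is the set of monomials $x_0^{i_0}\cdots x_{m-1}^{i_{m-1}}$, $i_j\in\{0,1\}$. For a monomial $f$, $\operatorname{ind}(f)$ is the set of indices of variables dividing $f$, $\deg f=|\operatorname{ind}(f)|$; $\gcd(f,g)$ has $\operatorname{ind}=\operatorname{ind}(f)\cap\operatorname{ind}(g)$; for $h\mid f$, $f/h$ has $\operatorname{ind}=\operatorname{ind}(f)\setminus\operatorname{ind}(h)$. Order: $f\preceq_w g$ iff $\operatorname{ind}(f)\subseteq\operatorname{ind}(g)$; for equal-degree $f=x_{i_1}\cdots x_{i_s}$, $g=x_{j_1}\cdots x_{j_s}$ (increasing indices), $f\preceq_{sh}g$ iff $i_\ell\le j_\ell$ for all $\ell$; $f\preceq g$ iff $f\preceq_{sh}g^*\preceq_w g$ for some $g^*$. $\mathcal{I}$ is decreasing if $f\in\mathcal{I}$, $g\preceq f$ imply $g\in\mathcal{I}$; $\mathcal{I}_r=\{f\in\mathcal{I}:\deg f=r\}$. ${\rm LTA}(m,2)$ is the set of pairs $(\mathbf{B},\varepsilon)$ with $\mathbf{B}=(b_{i,j})\in\mathbb{F}_2^{m\times m}$ lower triangular with ones on the diagonal and $\varepsilon\in\mathbb{F}_2^m$; for a monomial $u$, $(\mathbf{B},\varepsilon)\cdot u\in\mathbf{R}_m$ replaces each variable $x_i$ of $u$ by $x_i+\sum_{j<i}b_{i,j}x_j+\varepsilon_i$.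 For a monomial $g$, ${\rm LTA}(m,2)_g$ is the set of $(\mathbf{B},\varepsilon)\in{\rm LTA}(m,2)$ with $\varepsilon_i=0$ for $i\notin\operatorname{ind}(g)$ and $b_{i,j}=0$ (for $j<i$) whenever $i\notin\operatorname{ind}(g)$ or $j\in\operatorname{ind}(g)$. For $G\subseteq{\rm LTA}(m,2)$ and monomial $u$, $G\cdot u=\{(\mathbf{B},\varepsilon)\cdot u:(\mathbf{B},\varepsilon)\in G\}$. For sets $\mathcal{S},\mathcal{T}\subseteq\mathbf{R}_m$: $\mathcal{S}+\mathcal{T}=\{s+t\}$, $\mathcal{S}\cdot\mathcal{T}=\{st\}$; $G\cdot h\cdot(\mathcal{S})$ is the product of the set $G\cdot h$ with the set $\mathcal{S}$. *)

theory Defs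
  imports Main
begin

text \<open>Elements of R_m = F_2[x_0..x_{m-1}]/(x_i^2 - x_i) are represented in the
standard monomial basis: a monomial is the (finite) set of indices of its
variables, and an element of R_m is the finite set of monomials occurring with
coefficient 1.\<close>

type_synonym mono = "nat set"
type_synonym rpoly = "nat set set"

definition monomials :: "nat \<Rightarrow> mono set" where
  "monomials m = Pow {..<m}"

definition padd :: "rpoly \<Rightarrow> rpoly \<Rightarrow> rpoly" where
  "padd p q = (p - q) \<union> (q - p)"

definition pmul :: "rpoly \<Rightarrow> rpoly \<Rightarrow> rpoly" where
  "pmul p q = {u. odd (card {(a, b). a \<in> p \<and> b \<in> q \<and> a \<union> b = u})}"

definition pone :: rpoly where "pone = {{}}"

definition pvar :: "nat \<Rightarrow> rpoly" where "pvar i = {{i}}"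

definition prec_w :: "mono \<Rightarrow> mono \<Rightarrow> bool" where
  "prec_w f g \<longleftrightarrow> f \<subseteq> g"

definition prec_sh :: "mono \<Rightarrow> mono \<Rightarrow> bool" where
  "prec_sh f g \<longleftrightarrow> card f = card g \<and>
     (\<forall>l < card f. sorted_list_of_set f ! l \<le> sorted_list_of_set g ! l)"

definition prec :: "nat \<Rightarrow> mono \<Rightarrow> mono \<Rightarrow> bool" where
  "prec m f g \<longleftrightarrow> (\<exists>g' \<in> monomials m. prec_sh f g' \<and> prec_w g' g)"

definition decreasing :: "nat \<Rightarrow> mono set \<Rightarrow> bool" where
  "decreasing m I \<longleftrightarrow> I \<subseteq> monomials m \<and>
     (\<forall>f \<in> I. \<forall>g \<in> monomials m. prec m g f \<longrightarrow> g \<in> I)"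

definition layer :: "mono set \<Rightarrow> nat \<Rightarrow> mono set" where
  "layer I r = {f \<in> I. card f = r}"

text \<open>The lower triangular affine group LTA(m,2): a matrix B is a function
nat => nat => bool (B i j = entry b_{i,j}), lower triangular with ones on the
diagonal and zero outside the m x m block; eps is zero outside {..<m}.\<close>

definition lta :: "nat \<Rightarrow> ((nat \<Rightarrow> nat \<Rightarrow> bool) \<times> (nat \<Rightarrow> bool)) set" where
  "lta m = {(B, e). (\<forall>i<m. B i i) \<and> (\<forall>i j. B i j \<longrightarrow> j \<le> i \<and> i < m)
                   \<and> (\<forall>i. e i \<longrightarrow> i < m)}"

definition lta_stab :: "nat \<Rightarrow> mono \<Rightarrow> ((nat \<Rightarrow> nat \<Rightarrow> bool) \<times> (nat \<Rightarrow> bool)) set" where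
  "lta_stab m g = {(B, e) \<in> lta m. (\<forall>i. i \<notin> g \<longrightarrow> \<not> e i) \<and>
       (\<forall>i j. j < i \<and> (i \<notin> g \<or> j \<in> g) \<longrightarrow> \<not> B i j)}"

definition lin_img :: "(nat \<Rightarrow> nat \<Rightarrow> bool) \<Rightarrow> (nat \<Rightarrow> bool) \<Rightarrow> nat \<Rightarrow> rpoly" where
  "lin_img B e i = padd (pvar i)
      (padd (foldr padd (map pvar (filter (\<lambda>j. B i j) [0..<i])) {})
            (if e i then pone else {}))"

definition act :: "(nat \<Rightarrow> nat \<Rightarrow> bool) \<times> (nat \<Rightarrow> bool) \<Rightarrow> mono \<Rightarrow> rpoly" where
  "act Be u = foldr pmul (map (lin_img (fst Be) (snd Be)) (sorted_list_of_set u)) pone"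

definition orbit :: "((nat \<Rightarrow> nat \<Rightarrow> bool) \<times> (nat \<Rightarrow> bool)) set \<Rightarrow> mono \<Rightarrow> rpoly set" where
  "orbit G u = (\<lambda>Be. act Be u) ` G"

definition set_add :: "rpoly set \<Rightarrow> rpoly set \<Rightarrow> rpoly set" where
  "set_add S T = {padd s t | s t. s \<in> S \<and> t \<in> T}"

definition set_mul :: "rpoly set \<Rightarrow> rpoly set \<Rightarrow> rpoly set" where
  "set_mul S T = {pmul s t | s t. s \<in> S \<and> t \<in> T}"

text \<open>LTA(m,2)_h . h . (LTA(m,2)_f . f/h + LTA(m,2)_g . g/h) with h = gcd(f,g).\<close>

definition pair_set :: "nat \<Rightarrow> mono \<Rightarrow> mono \<Rightarrow> rpoly set" where
  "pair_set m f g = (let h = f \<inter> g in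
     set_mul (orbit (lta_stab m h) h)
       (set_add (orbit (lta_stab m f) (f - h)) (orbit (lta_stab m g) (g - h))))"

end

theory Submission
  imports Defs
begin

definition tog :: "nat \<Rightarrow> nat set \<Rightarrow> nat set" where
  "tog t x = (if t \<in> x then x - {t} else insert t x)"

lemma tog_below: "i \<le> t \<Longrightarrow> tog t x \<inter> {..<i} = x \<inter> {..<i}"
  by (auto simp: tog_def)

definition trif :: "(nat \<Rightarrow> nat set \<Rightarrow> bool) \<Rightarrow> nat \<Rightarrow> bool" where
  "trif L i \<longleftrightarrow> (\<exists>\<phi>. \<forall>x. L i x = ((i \<in> x) \<noteq> \<phi> (x \<inter> {..<i})))"

lemma trif_loc: "trif L i \<Longrightarrow> x \<inter> {..<i} = y \<inter> {..<i} \<Longrightarrow> (i \<in> x) = (i \<in> y) \<Longrightarrow> L i x = L i y"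
  unfolding trif_def by metis

lemma trif_tog_lt: "trif L i \<Longrightarrow> i < t \<Longrightarrow> L i (tog t x) = L i x"
  by (rule trif_loc) (auto simp: tog_def)

lemma trif_tog_eq: "trif L t \<Longrightarrow> L t (tog t x) = (\<not> L t x)"
proof -
  assume "trif L t"
  then obtain \<phi> where p: "\<And>x. L t x = ((t \<in> x) \<noteq> \<phi> (x \<inter> {..<t}))" unfolding trif_def by blast
  have "tog t x \<inter> {..<t} = x \<inter> {..<t}" by (rule tog_below) simp
  moreover have "(t \<in> tog t x) = (t \<notin> x)" by (auto simp: tog_def)
  ultimately show ?thesis using p[of x] p[of "tog t x"] by auto
qed

definition mprod :: "(nat \<Rightarrow> nat set \<Rightarrow> bool) \<Rightarrow> nat set \<Rightarrow> nat set \<Rightarrow> bool" where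
  "mprod L u x \<longleftrightarrow> (\<forall>i\<in>u. L i x)"

definition pairf :: "(nat \<Rightarrow> nat set \<Rightarrow> bool) \<Rightarrow> nat set \<Rightarrow> nat set \<Rightarrow> nat set \<Rightarrow> nat set \<Rightarrow> bool" where
  "pairf L h A B x \<longleftrightarrow> mprod L h x \<and> (mprod L A x \<noteq> mprod L B x)"

lemma ext_aux:
  assumes "\<forall>i\<in>u. trif L i" "\<forall>i\<in>u. i < w \<longrightarrow> L i y = s i"
  shows "\<exists>x. x \<inter> {..<w} = y \<inter> {..<w} \<and> (\<forall>i\<in>u. i < w + k \<longrightarrow> L i x = s i)"
proof (induction k)
  case 0 show ?case using assms(2) by (intro exI[of _ y]) simp
next
  case (Suc k)
  then obtain x where x: "x \<inter> {..<w} = y \<inter> {..<w}" "\<forall>i\<in>u. i < w + k \<longrightarrow> L i x = s i" by blast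
  define n where "n = w + k"
  show ?case
  proof (cases "n \<in> u \<and> L n x \<noteq> s n")
    case True
    have "tog n x \<inter> {..<w} = x \<inter> {..<w}" by (rule tog_below) (simp add: n_def)
    then have 1: "tog n x \<inter> {..<w} = y \<inter> {..<w}" using x(1) by simp
    have 2: "\<forall>i\<in>u. i < w + Suc k \<longrightarrow> L i (tog n x) = s i"
    proof (intro ballI impI)
      fix i assume i: "i \<in> u" "i < w + Suc k"
      have tr: "trif L i" using assms(1) i(1) by blast
      show "L i (tog n x) = s i"
      proof (cases "i = n")
        case True
        have "L n (tog n x) = (\<not> L n x)" using tr True by (simp add: trif_tog_eq)
        thus ?thesis using True \<open>n \<in> u \<and> L n x \<noteq> s n\<close> by blast
      next
        case False then have "i < n" using i(2) n_def by simp
        then have "L i (tog n x) = L i x" using tr by (simp add: trif_tog_lt)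
        moreover have "L i x = s i" using x(2) i(1) \<open>i < n\<close> n_def by blast
        ultimately show ?thesis by simp
      qed
    qed
    show ?thesis using 1 2 by blast
  next
    case False
    have "\<forall>i\<in>u. i < w + Suc k \<longrightarrow> L i x = s i"
    proof (intro ballI impI)
      fix i assume i: "i \<in> u" "i < w + Suc k"
      show "L i x = s i"
      proof (cases "i = n")
        case True thus ?thesis using False i(1) by blast
      next
        case False then have "i < w + k" using i(2) n_def by simp
        thus ?thesis using x(2) i(1) by blast
      qed
    qed
    thus ?thesis using x(1) by blast
  qed
qed

lemma ext:
  assumes "finite u" "\<forall>i\<in>u. trif L i" "\<forall>i\<in>u. i < w \<longrightarrow> L i y = s i"
  shows "\<exists>x. x \<inter> {..<w} = y \<inter> {..<w} \<and> (\<forall>i\<in>u. L i x = s i)"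
proof -
  obtain x where x: "x \<inter> {..<w} = y \<inter> {..<w}" "\<forall>i\<in>u. i < w + Suc (Max u) \<longrightarrow> L i x = s i"
    using ext_aux[OF assms(2,3), of "Suc (Max u)"] by blast
  have "\<forall>i\<in>u. i < w + Suc (Max u)"
  proof
    fix i assume "i \<in> u" hence "i \<le> Max u" using Max_ge[OF assms(1)] by auto
    thus "i < w + Suc (Max u)" by simp
  qed
  then have "\<forall>i\<in>u. L i x = s i" using x(2) by blast
  thus ?thesis using x(1) by blast
qed

lemma nz:
  assumes "finite u" "\<forall>i\<in>u. trif L i"
  shows "\<exists>x. \<forall>i\<in>u. L i x = s i"
proof -
  have "\<forall>i\<in>u. i < 0 \<longrightarrow> L i {} = s i" by simp
  from ext[OF assms this] show ?thesis by blast
qed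

lemma mprod_inv: "\<forall>i\<in>u. trif L i \<and> i < t \<Longrightarrow> mprod L u (tog t x) = mprod L u x"
  unfolding mprod_def using trif_tog_lt by blast

lemma mprod_split: "t \<in> u \<Longrightarrow> mprod L u x = (L t x \<and> mprod L (u - {t}) x)"
  unfolding mprod_def by blast

lemma mprod_D:
  assumes "t \<in> u" "\<forall>i\<in>u. trif L i" "\<forall>i\<in>u. i \<le> t"
  shows "(mprod L u x \<noteq> mprod L u (tog t x)) = mprod L (u - {t}) x"
proof -
  have "mprod L (u - {t}) (tog t x) = mprod L (u - {t}) x"
    using assms by (intro mprod_inv) (auto simp: le_less)
  moreover have "L t (tog t x) = (\<not> L t x)" using assms by (intro trif_tog_eq) auto
  ultimately show ?thesis using mprod_split[OF assms(1), of L x] mprod_split[OF assms(1), of L "tog t x"] by auto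
qed

definition hastop :: "(nat set \<Rightarrow> bool) \<Rightarrow> nat \<Rightarrow> bool" where
  "hastop P t \<longleftrightarrow> (\<exists>x. P x \<noteq> P (tog t x)) \<and> (\<forall>s>t. \<forall>x. P (tog s x) = P x)"

lemma hastop_unique: "hastop P t \<Longrightarrow> hastop P t' \<Longrightarrow> t = t'"
  unfolding hastop_def by (metis linorder_neqE_nat)

lemma mprod_top:
  assumes "finite u" "u \<noteq> {}" "\<forall>i\<in>u. trif L i"
  shows "hastop (mprod L u) (Max u)"
proof -
  obtain x where "\<forall>i\<in>u - {Max u}. L i x = True" using nz[of "u - {Max u}" L "\<lambda>_. True"] assms by auto
  then have "mprod L (u - {Max u}) x" unfolding mprod_def by auto
  then have "mprod L u x \<noteq> mprod L u (tog (Max u) x)"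
    using mprod_D[of "Max u" u L x] assms by auto
  moreover have "\<forall>s>Max u. \<forall>x. mprod L u (tog s x) = mprod L u x"
    using assms by (auto intro!: mprod_inv dest: Max_ge[OF assms(1)])
  ultimately show ?thesis unfolding hastop_def by blast
qed

lemma mprod_empty_notop: "\<not> hastop (mprod L {}) t"
  unfolding hastop_def mprod_def by auto

lemma mprod_false:
  assumes "finite v" "v \<noteq> {}" "\<forall>i\<in>v. trif L i"
  shows "\<exists>x. \<not> mprod L v x"
  using nz[OF assms(1,3), of "\<lambda>_. False"] assms(2) unfolding mprod_def by auto

lemma hastop_cong: "(\<And>x. P x = Q x) \<Longrightarrow> hastop P t = hastop Q t"
  unfolding hastop_def by simp

lemma mprod_inj:
  "finite u \<Longrightarrow> finite v \<Longrightarrow> \<forall>i\<in>u. trif L i \<Longrightarrow> \<forall>i\<in>v. trif L' i \<Longrightarrow>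
   (\<forall>x. mprod L u x = mprod L' v x) \<Longrightarrow> u = v"
proof (induction "card u" arbitrary: u v rule: less_induct)
  case (less u v)
  note fu = less(2) and fv = less(3) and tu0 = less(4) and tv0 = less(5) and eq = less(6)
  show ?case
  proof (cases "u = {}")
    case True
    show ?thesis
    proof (rule ccontr)
      assume "u \<noteq> v" then have "v \<noteq> {}" using True by simp
      then obtain x where "\<not> mprod L' v x" using mprod_false fv tv0 by blast
      moreover have "mprod L u x" using True unfolding mprod_def by simp
      ultimately show False using eq by simp
    qed
  next
    case False
    have vne: "v \<noteq> {}"
    proof
      assume "v = {}"
      then obtain x where "\<not> mprod L u x" using mprod_false fu tu0 False by blast
      moreover have "mprod L' v x" using \<open>v = {}\<close> unfolding mprod_def by simp
      ultimately show False using eq by simp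
    qed
    have t0: "hastop (mprod L u) (Max u)" by (rule mprod_top[OF fu False tu0])
    have t1: "hastop (mprod L' v) (Max u)"
      using t0 hastop_cong[of "mprod L u" "mprod L' v" "Max u"] eq by simp
    have "Max u = Max v" using hastop_unique[OF t1 mprod_top[OF fv vne tv0]] .
    define t where "t = Max u"
    have tu: "t \<in> u" "\<forall>i\<in>u. i \<le> t" using False fu t_def by auto
    have tv: "t \<in> v" "\<forall>i\<in>v. i \<le> t" using vne fv t_def \<open>Max u = Max v\<close> by auto
    have eq2: "\<forall>x. mprod L (u - {t}) x = mprod L' (v - {t}) x"
    proof
      fix x
      have "mprod L (u - {t}) x = (mprod L u x \<noteq> mprod L u (tog t x))"
        using mprod_D[OF tu(1) tu0 tu(2)] by simp
      also have "\<dots> = (mprod L' v x \<noteq> mprod L' v (tog t x))" using eq by simp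
      also have "\<dots> = mprod L' (v - {t}) x" using mprod_D[OF tv(1) tv0 tv(2)] by simp
      finally show "mprod L (u - {t}) x = mprod L' (v - {t}) x" .
    qed
    have "card (u - {t}) < card u" using fu tu(1) by (rule card_Diff1_less)
    moreover have "finite (u - {t})" "finite (v - {t})" using fu fv by auto
    moreover have "\<forall>i\<in>u - {t}. trif L i" "\<forall>i\<in>v - {t}. trif L' i" using tu0 tv0 by auto
    ultimately have "u - {t} = v - {t}" using less(1) eq2 by blast
    thus ?thesis using tu tv by blast
  qed
qed


lemma pairf_swap: "pairf L h A B x = pairf L h B A x"
  unfolding pairf_def by auto

lemma pairf_inv:
  assumes "\<forall>i\<in>h \<union> A \<union> B. trif L i \<and> i < s"
  shows "pairf L h A B (tog s x) = pairf L h A B x"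
proof -
  have "mprod L h (tog s x) = mprod L h x" using assms by (intro mprod_inv) blast
  moreover have "mprod L A (tog s x) = mprod L A x" using assms by (intro mprod_inv) blast
  moreover have "mprod L B (tog s x) = mprod L B x" using assms by (intro mprod_inv) blast
  ultimately show ?thesis unfolding pairf_def by simp
qed

lemma pairf_D_h:
  assumes "t \<in> h" "t \<notin> A" "t \<notin> B" "\<forall>i\<in>h \<union> A \<union> B. trif L i \<and> i \<le> t"
  shows "(pairf L h A B x \<noteq> pairf L h A B (tog t x)) = pairf L (h - {t}) A B x"
proof -
  have a: "mprod L A (tog t x) = mprod L A x" using assms by (intro mprod_inv) (auto simp: le_less)
  have b: "mprod L B (tog t x) = mprod L B x" using assms by (intro mprod_inv) (auto simp: le_less)
  have c: "(mprod L h x \<noteq> mprod L h (tog t x)) = mprod L (h - {t}) x"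
    using assms by (intro mprod_D) auto
  show ?thesis using a b c unfolding pairf_def by auto
qed

lemma pairf_D_A:
  assumes "t \<in> A" "t \<notin> h" "t \<notin> B" "\<forall>i\<in>h \<union> A \<union> B. trif L i \<and> i \<le> t"
  shows "(pairf L h A B x \<noteq> pairf L h A B (tog t x)) = mprod L (h \<union> (A - {t})) x"
proof -
  have a: "mprod L h (tog t x) = mprod L h x" using assms by (intro mprod_inv) (auto simp: le_less)
  have b: "mprod L B (tog t x) = mprod L B x" using assms by (intro mprod_inv) (auto simp: le_less)
  have c: "(mprod L A x \<noteq> mprod L A (tog t x)) = mprod L (A - {t}) x"
    using assms by (intro mprod_D) auto
  have d: "mprod L (h \<union> (A - {t})) x = (mprod L h x \<and> mprod L (A - {t}) x)"
    unfolding mprod_def by blast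
  show ?thesis using a b c d unfolding pairf_def by auto
qed

lemma pairf_nz:
  assumes "finite h" "finite A" "b \<in> B" "b \<notin> h" "b \<notin> A" "\<forall>i\<in>h \<union> A \<union> B. trif L i"
  shows "\<exists>x. pairf L h A B x"
proof -
  have "finite (h \<union> A \<union> {b})" using assms by simp
  moreover have "\<forall>i\<in>h \<union> A \<union> {b}. trif L i" using assms by blast
  ultimately obtain x where x: "\<forall>i\<in>h \<union> A \<union> {b}. L i x = (i \<noteq> b)" using nz[of "h \<union> A \<union> {b}" L "\<lambda>i. i \<noteq> b"] by blast
  have "mprod L h x" "mprod L A x" using x assms(4,5) unfolding mprod_def by auto
  moreover have "\<not> mprod L B x" using x assms(3) unfolding mprod_def by auto
  ultimately show ?thesis unfolding pairf_def by auto
qed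

lemma pairf_top:
  assumes "finite h" "finite A" "finite B" "A \<noteq> {}" "B \<noteq> {}"
    "h \<inter> A = {}" "h \<inter> B = {}" "A \<inter> B = {}" "\<forall>i\<in>h \<union> A \<union> B. trif L i"
  shows "hastop (pairf L h A B) (Max (h \<union> A \<union> B))"
proof -
  define t where "t = Max (h \<union> A \<union> B)"
  have fin: "finite (h \<union> A \<union> B)" using assms by simp
  have ne: "h \<union> A \<union> B \<noteq> {}" using assms(4) by auto
  have tin: "t \<in> h \<union> A \<union> B" using Max_in[OF fin ne] t_def by simp
  have tle: "\<forall>i\<in>h \<union> A \<union> B. trif L i \<and> i \<le> t" using assms(9) Max_ge[OF fin] t_def by blast
  have ex: "\<exists>x. pairf L h A B x \<noteq> pairf L h A B (tog t x)"
  proof -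
    { assume th: "t \<in> h"
      then have ta: "t \<notin> A" "t \<notin> B" using assms(6,7) by auto
      obtain b where b: "b \<in> B" using assms(5) by blast
      have "\<exists>x. pairf L (h - {t}) A B x"
        using assms b by (intro pairf_nz[where b=b]) auto
      then have ?thesis using pairf_D_h[OF th ta tle] by auto }
    moreover
    { assume th: "t \<in> A"
      then have ta: "t \<notin> h" "t \<notin> B" using assms(6,8) by auto
      have "\<exists>x. \<forall>i\<in>h \<union> (A - {t}). L i x = True"
        using assms by (intro nz[of _ L "\<lambda>_. True"]) auto
      then have "\<exists>x. mprod L (h \<union> (A - {t})) x" unfolding mprod_def by auto
      then have ?thesis using pairf_D_A[OF th ta tle] by auto }
    moreover
    { assume th: "t \<in> B"
      then have ta: "t \<notin> h" "t \<notin> A" using assms(7,8) by auto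
      have tle': "\<forall>i\<in>h \<union> B \<union> A. trif L i \<and> i \<le> t" using tle by blast
      have "\<exists>x. \<forall>i\<in>h \<union> (B - {t}). L i x = True"
        using assms by (intro nz[of _ L "\<lambda>_. True"]) auto
      then have "\<exists>x. mprod L (h \<union> (B - {t})) x" unfolding mprod_def by auto
      then have ?thesis using pairf_D_A[OF th ta tle'] pairf_swap[of L h A B] by metis }
    ultimately show ?thesis using tin by blast
  qed
  have "\<forall>s>t. \<forall>x. pairf L h A B (tog s x) = pairf L h A B x"
  proof (intro allI impI)
    fix s x assume "t < s"
    then have "\<forall>i\<in>h \<union> A \<union> B. trif L i \<and> i < s" using tle by force
    thus "pairf L h A B (tog s x) = pairf L h A B x" by (rule pairf_inv)
  qed
  thus ?thesis using ex t_def unfolding hastop_def by blast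
qed


lemma trif_cong: "L i = L' i \<Longrightarrow> trif L i = trif L' i"
  unfolding trif_def by simp

lemma card2_split:
  assumes "card A = 2" "t \<in> A"
  obtains a where "A = {a, t}" "a \<noteq> t" "A - {t} = {a}"
proof -
  have "finite A" using assms(1) by (metis card.infinite zero_neq_numeral)
  have "card (A - {t}) = 1" using assms \<open>finite A\<close> by simp
  then obtain a where a: "A - {t} = {a}" by (rule card_1_singletonE)
  then have "A = {a, t}" using assms(2) by blast
  moreover have "a \<noteq> t" using a by blast
  ultimately show ?thesis using that a by blast
qed

lemma pair_mono_A:
  assumes fin: "finite h" "finite B" and cA: "card A = 2" and tA: "t \<in> A"
    and dis: "h \<inter> A = {}" "h \<inter> B = {}" "A \<inter> B = {}"
    and tle: "\<forall>i\<in>h \<union> A \<union> B. trif L i \<and> i \<le> t"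
    and tu: "t \<in> u" "\<forall>i\<in>u. trif M i \<and> i \<le> t"
    and eq1: "\<forall>x. pairf L h A B x = mprod M u x"
  shows False
proof -
  obtain a where A: "A = {a, t}" "a \<noteq> t" "A - {t} = {a}" using card2_split[OF cA tA] by blast
  have ta: "t \<notin> h" "t \<notin> B" using tA dis by auto
  have eq2: "\<forall>x. mprod L (h \<union> {a}) x = mprod M (u - {t}) x"
  proof
    fix x
    have "mprod L (h \<union> {a}) x = (pairf L h A B x \<noteq> pairf L h A B (tog t x))"
      using pairf_D_A[OF tA ta tle] A(3) by simp
    also have "\<dots> = (mprod M u x \<noteq> mprod M u (tog t x))" using eq1 by simp
    also have "\<dots> = mprod M (u - {t}) x" using tu by (intro mprod_D) auto
    finally show "mprod L (h \<union> {a}) x = mprod M (u - {t}) x" .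
  qed
  have a: "a \<notin> h" "a \<notin> B" using A dis by auto
  have f3: "finite (h \<union> B \<union> {a})" using fin by simp
  have t3: "\<forall>i\<in>h \<union> B \<union> {a}. trif L i" using tle A by blast
  obtain x where x: "\<forall>i\<in>h \<union> B \<union> {a}. L i x = (i \<noteq> a)"
    using nz[OF f3 t3, of "\<lambda>i. i \<noteq> a"] by blast
  have "mprod L h x" "mprod L B x" using x a unfolding mprod_def by auto
  moreover have "\<not> mprod L A x" using x A unfolding mprod_def by auto
  ultimately have "pairf L h A B x" unfolding pairf_def by simp
  then have "mprod M u x" using eq1 by simp
  then have "mprod M (u - {t}) x" unfolding mprod_def by auto
  then have "mprod L (h \<union> {a}) x" using eq2 by simp
  thus False using x unfolding mprod_def by auto
qed

lemma pair_mono: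
  "finite h \<Longrightarrow> finite A \<Longrightarrow> finite B \<Longrightarrow> finite u \<Longrightarrow> card A = 2 \<Longrightarrow> card B = 2 \<Longrightarrow>
   h \<inter> A = {} \<Longrightarrow> h \<inter> B = {} \<Longrightarrow> A \<inter> B = {} \<Longrightarrow> \<forall>i\<in>h \<union> A \<union> B. trif L i \<Longrightarrow> \<forall>i\<in>u. trif M i \<Longrightarrow>
   (\<forall>x. pairf L h A B x = mprod M u x) \<Longrightarrow> False"
proof (induction "card h" arbitrary: h A B u rule: less_induct)
  case (less h A B u)
  note fh = less(2) and fA = less(3) and fB = less(4) and fu = less(5) and cA = less(6) and cB = less(7)
    and d1 = less(8) and d2 = less(9) and d3 = less(10) and tr = less(11) and trM = less(12) and eq = less(13)
  define t where "t = Max (h \<union> A \<union> B)"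
  have Ane: "A \<noteq> {}" "B \<noteq> {}" using cA cB by auto
  have top: "hastop (pairf L h A B) t" using pairf_top[OF fh fA fB Ane d1 d2 d3 tr] t_def by simp
  then have topM: "hastop (mprod M u) t" using hastop_cong[of "pairf L h A B" "mprod M u" t] eq by simp
  have une: "u \<noteq> {}" using topM mprod_empty_notop by blast
  have "Max u = t" using hastop_unique[OF mprod_top[OF fu une trM] topM] .
  then have tu: "t \<in> u" "\<forall>i\<in>u. trif M i \<and> i \<le> t" using Max_in[OF fu une] Max_ge[OF fu] trM by auto
  have fin: "finite (h \<union> A \<union> B)" using fh fA fB by simp
  have ne: "h \<union> A \<union> B \<noteq> {}" using Ane by auto
  have tin: "t \<in> h \<union> A \<union> B" using Max_in[OF fin ne] t_def by simp
  have tle: "\<forall>i\<in>h \<union> A \<union> B. trif L i \<and> i \<le> t" using tr Max_ge[OF fin] t_def by blast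
  consider "t \<in> h" | "t \<in> A" | "t \<in> B" using tin by blast
  then show False
  proof cases
    case 1
    have ta: "t \<notin> A" "t \<notin> B" using 1 d1 d2 by auto
    have eq2: "\<forall>x. pairf L (h - {t}) A B x = mprod M (u - {t}) x"
    proof
      fix x
      have "pairf L (h - {t}) A B x = (pairf L h A B x \<noteq> pairf L h A B (tog t x))"
        using pairf_D_h[OF 1 ta tle] by simp
      also have "\<dots> = (mprod M u x \<noteq> mprod M u (tog t x))" using eq by simp
      also have "\<dots> = mprod M (u - {t}) x" using tu by (intro mprod_D) auto
      finally show "pairf L (h - {t}) A B x = mprod M (u - {t}) x" .
    qed
    have c: "card (h - {t}) < card h" using fh 1 by (rule card_Diff1_less)
    show False
      using less(1)[OF c _ fA fB _ cA cB _ _ d3 _ _ eq2] fh fu d1 d2 tr trM by blast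
  next
    case 2
    show False using pair_mono_A[OF fh fB cA 2 d1 d2 d3 tle tu eq] .
  next
    case 3
    have eq': "\<forall>x. pairf L h B A x = mprod M u x" using eq pairf_swap by metis
    have d3': "B \<inter> A = {}" using d3 by blast
    have tle': "\<forall>i\<in>h \<union> B \<union> A. trif L i \<and> i \<le> t" using tle by blast
    show False using pair_mono_A[OF fh fA cB 3 d2 d1 d3' tle' tu eq'] .
  qed
qed

lemma SI:
  assumes fin: "finite h" "finite B" and a: "a \<notin> h" "a \<notin> B"
    and tr: "\<forall>i\<in>h \<union> B \<union> {a}. trif L i" and trw: "trif L' w"
    and w: "w \<in> h' \<union> B'" "w \<notin> h \<union> B" "w \<noteq> a"
    and F1: "\<forall>x. \<not> mprod L (h \<union> {a}) x \<longrightarrow> mprod L (h \<union> B) x = mprod L' (h' \<union> B') x"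
  shows False
proof -
  define K where "K = (\<lambda>i. if i = w then L' i else L i)"
  have f4: "finite (h \<union> B \<union> {a} \<union> {w})" using fin by simp
  have t4: "\<forall>i\<in>h \<union> B \<union> {a} \<union> {w}. trif K i"
  proof
    fix i assume i: "i \<in> h \<union> B \<union> {a} \<union> {w}"
    show "trif K i"
    proof (cases "i = w")
      case True thus ?thesis using trw trif_cong[of K i L'] K_def by simp
    next
      case False
      have "i \<in> h \<union> B \<union> {a}" using i False by blast
      then have "trif L i" using tr by blast
      moreover have "K i = L i" using False K_def by simp
      ultimately show ?thesis using trif_cong[of K i L] by simp
    qed
  qed
  obtain x where x: "\<forall>i\<in>h \<union> B \<union> {a} \<union> {w}. K i x = (i \<noteq> a \<and> i \<noteq> w)"
    using nz[OF f4 t4, of "\<lambda>i. i \<noteq> a \<and> i \<noteq> w"] by blast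
  have "mprod L (h \<union> B) x"
    unfolding mprod_def
  proof
    fix i assume i: "i \<in> h \<union> B"
    then have iw: "i \<noteq> w" "i \<noteq> a" using w a by auto
    have "K i x = (i \<noteq> a \<and> i \<noteq> w)" using x i by blast
    then have "K i x" using iw by simp
    moreover have "K i = L i" using iw(1) K_def by simp
    ultimately show "L i x" by simp
  qed
  moreover have "K a x = (a \<noteq> a \<and> a \<noteq> w)" using x by blast
  then have "\<not> L a x" using w(3) K_def by simp
  then have "\<not> mprod L (h \<union> {a}) x" unfolding mprod_def by blast
  ultimately have "mprod L' (h' \<union> B') x" using F1 by blast
  then have "L' w x" using w(1) unfolding mprod_def by blast
  moreover have "K w x = (w \<noteq> a \<and> w \<noteq> w)" using x by blast
  then have "\<not> L' w x" using K_def by simp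
  ultimately show False by simp
qed

lemma SIII:
  assumes fin: "finite h" "finite B" and a: "a' < a" "a' \<in> h" "a \<notin> h" "a \<notin> B"
    and tr: "\<forall>i\<in>h \<union> B \<union> {a}. trif L i" and tr': "trif L' a'"
    and Q: "\<forall>x. mprod L (h \<union> {a}) x = mprod L' (h' \<union> {a'}) x"
    and F1: "\<forall>x. \<not> mprod L (h \<union> {a}) x \<longrightarrow> mprod L (h \<union> B) x = mprod L' (h' \<union> B') x"
  shows False
proof -
  obtain \<phi> where \<phi>: "\<And>x. L a' x = ((a' \<in> x) \<noteq> \<phi> (x \<inter> {..<a'}))"
    using tr a(2) unfolding trif_def by blast
  obtain \<phi>' where \<phi>': "\<And>x. L' a' x = ((a' \<in> x) \<noteq> \<phi>' (x \<inter> {..<a'}))"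
    using tr' unfolding trif_def by blast
  have claim: "\<forall>x0. mprod L h x0 \<longrightarrow> L' a' x0"
  proof (intro allI impI)
    fix x0 assume h0: "mprod L h x0"
    have f2: "finite (h \<union> {a})" using fin by simp
    have t2: "\<forall>i\<in>h \<union> {a}. trif L i" using tr by blast
    have b2: "\<forall>i\<in>h \<union> {a}. i < a' \<longrightarrow> L i x0 = True" using h0 a(1) unfolding mprod_def by auto
    obtain x where x: "x \<inter> {..<a'} = x0 \<inter> {..<a'}" "\<forall>i\<in>h \<union> {a}. L i x = True"
      using ext[OF f2 t2 b2] by blast
    have "mprod L (h \<union> {a}) x" using x(2) unfolding mprod_def by auto
    then have "mprod L' (h' \<union> {a'}) x" using Q by simp
    then have l1: "L' a' x" unfolding mprod_def by auto
    have l2: "L a' x" using x(2) a(2) by auto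
    have l3: "L a' x0" using h0 a(2) unfolding mprod_def by auto
    have "\<phi>' (x \<inter> {..<a'}) = \<phi> (x \<inter> {..<a'})" using l1 l2 \<phi>[of x] \<phi>'[of x] by auto
    then show "L' a' x0" using l3 \<phi>[of x0] \<phi>'[of x0] x(1) by auto
  qed
  have f3: "finite (h \<union> B \<union> {a})" using fin by simp
  obtain x where x: "\<forall>i\<in>h \<union> B \<union> {a}. L i x = (i \<noteq> a)"
    using nz[OF f3 tr, of "\<lambda>i. i \<noteq> a"] by blast
  have hx: "mprod L h x" "mprod L (h \<union> B) x" using x a unfolding mprod_def by auto
  have "\<not> L a x" using x by auto
  then have nq: "\<not> mprod L (h \<union> {a}) x" unfolding mprod_def by auto
  then have "mprod L' (h' \<union> B') x" using F1 hx(2) by blast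
  then have "mprod L' h' x" unfolding mprod_def by auto
  moreover have "\<not> mprod L' (h' \<union> {a'}) x" using nq Q by simp
  ultimately have "\<not> L' a' x" unfolding mprod_def by auto
  thus False using claim hx(1) by blast
qed

lemma case_B:
  assumes fin: "finite h" "finite B" "finite h'" "finite B'"
    and a: "a \<notin> h" "a \<notin> B" "a' \<notin> h'" "a' \<notin> B'"
    and tr: "\<forall>i\<in>h \<union> B \<union> {a}. trif L i" and tr': "\<forall>i\<in>h' \<union> B' \<union> {a'}. trif L' i"
    and Q: "\<forall>x. mprod L (h \<union> {a}) x = mprod L' (h' \<union> {a'}) x"
    and F1: "\<forall>x. \<not> mprod L (h \<union> {a}) x \<longrightarrow> mprod L (h \<union> B) x = mprod L' (h' \<union> B') x"
  shows "h \<union> B = h' \<union> B'"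
proof -
  have hu: "h \<union> {a} = h' \<union> {a'}"
    by (rule mprod_inj[of "h \<union> {a}" "h' \<union> {a'}" L L']) (use fin tr tr' Q in auto)
  have Q': "\<forall>x. mprod L' (h' \<union> {a'}) x = mprod L (h \<union> {a}) x" using Q by simp
  have F1': "\<forall>x. \<not> mprod L' (h' \<union> {a'}) x \<longrightarrow> mprod L' (h' \<union> B') x = mprod L (h \<union> B) x"
    using Q F1 by simp
  consider "a = a'" | "a' < a" | "a < a'" by linarith
  then show ?thesis
  proof cases
    case 1
    have s1: "h' \<union> B' \<subseteq> h \<union> B"
    proof
      fix w assume w: "w \<in> h' \<union> B'"
      show "w \<in> h \<union> B"
      proof (rule ccontr)
        assume nw: "w \<notin> h \<union> B"
        have "w \<noteq> a" using w 1 a(3,4) by auto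
        moreover have "trif L' w" using tr' w by auto
        ultimately show False using SI[OF fin(1,2) a(1,2) tr _ w nw _ F1] by blast
      qed
    qed
    have s2: "h \<union> B \<subseteq> h' \<union> B'"
    proof
      fix w assume w: "w \<in> h \<union> B"
      show "w \<in> h' \<union> B'"
      proof (rule ccontr)
        assume nw: "w \<notin> h' \<union> B'"
        have "w \<noteq> a'" using w 1 a(1,2) by auto
        moreover have "trif L w" using tr w by auto
        ultimately show False using SI[OF fin(3,4) a(3,4) tr' _ w nw _ F1'] by blast
      qed
    qed
    show ?thesis using s1 s2 by blast
  next
    case 2
    have "a' \<in> h" using hu 2 by blast
    moreover have "trif L' a'" using tr' by blast
    ultimately show ?thesis using SIII[OF fin(1,2) 2 _ a(1,2) tr _ Q F1] by blast
  next
    case 3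
    have "a \<in> h'" using hu 3 by blast
    moreover have "trif L a" using tr by blast
    ultimately show ?thesis using SIII[OF fin(3,4) 3 _ a(3,4) tr' _ Q' F1'] by blast
  qed
qed


lemma GP_AA:
  assumes fin: "finite h" "finite A" "finite B" "finite h'" "finite A'" "finite B'"
    and cA: "card A = 2" "card A' = 2"
    and dis: "h \<inter> A = {}" "h \<inter> B = {}" "A \<inter> B = {}" "h' \<inter> A' = {}" "h' \<inter> B' = {}" "A' \<inter> B' = {}"
    and tr: "\<forall>i\<in>h \<union> A \<union> B. trif L i \<and> i \<le> t" and tr': "\<forall>i\<in>h' \<union> A' \<union> B'. trif L' i \<and> i \<le> t"
    and tA: "t \<in> A" "t \<in> A'"
    and eq: "\<forall>x. pairf L h A B x = pairf L' h' A' B' x"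
  shows "h \<union> A = h' \<union> A' \<and> h \<union> B = h' \<union> B'"
proof -
  obtain a where A: "A = {a, t}" "a \<noteq> t" "A - {t} = {a}" using card2_split[OF cA(1) tA(1)] by blast
  obtain a' where A': "A' = {a', t}" "a' \<noteq> t" "A' - {t} = {a'}" using card2_split[OF cA(2) tA(2)] by blast
  have ta: "t \<notin> h" "t \<notin> B" using tA dis by auto
  have ta': "t \<notin> h'" "t \<notin> B'" using tA dis by auto
  have Q: "\<forall>x. mprod L (h \<union> {a}) x = mprod L' (h' \<union> {a'}) x"
  proof
    fix x
    have "mprod L (h \<union> {a}) x = (pairf L h A B x \<noteq> pairf L h A B (tog t x))"
      using pairf_D_A[OF tA(1) ta tr] A(3) by simp
    also have "\<dots> = (pairf L' h' A' B' x \<noteq> pairf L' h' A' B' (tog t x))" using eq by simp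
    also have "\<dots> = mprod L' (h' \<union> {a'}) x" using pairf_D_A[OF tA(2) ta' tr'] A'(3) by simp
    finally show "mprod L (h \<union> {a}) x = mprod L' (h' \<union> {a'}) x" .
  qed
  have F1: "\<forall>x. \<not> mprod L (h \<union> {a}) x \<longrightarrow> mprod L (h \<union> B) x = mprod L' (h' \<union> B') x"
  proof (intro allI impI)
    fix x assume nq: "\<not> mprod L (h \<union> {a}) x"
    have nq': "\<not> mprod L' (h' \<union> {a'}) x" using nq Q by simp
    have p1: "pairf L h A B x = mprod L (h \<union> B) x"
    proof (cases "mprod L h x")
      case True
      then have "\<not> L a x" using nq unfolding mprod_def by blast
      then have "\<not> mprod L A x" using A(1) unfolding mprod_def by blast
      thus ?thesis using True unfolding pairf_def mprod_def by blast
    next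
      case False thus ?thesis unfolding pairf_def mprod_def by blast
    qed
    have p2: "pairf L' h' A' B' x = mprod L' (h' \<union> B') x"
    proof (cases "mprod L' h' x")
      case True
      then have "\<not> L' a' x" using nq' unfolding mprod_def by blast
      then have "\<not> mprod L' A' x" using A'(1) unfolding mprod_def by blast
      thus ?thesis using True unfolding pairf_def mprod_def by blast
    next
      case False thus ?thesis unfolding pairf_def mprod_def by blast
    qed
    show "mprod L (h \<union> B) x = mprod L' (h' \<union> B') x" using p1 p2 eq by simp
  qed
  have a: "a \<notin> h" "a \<notin> B" "a' \<notin> h'" "a' \<notin> B'" using A A' dis by auto
  have t1: "\<forall>i\<in>h \<union> B \<union> {a}. trif L i" using tr A by blast
  have t2: "\<forall>i\<in>h' \<union> B' \<union> {a'}. trif L' i" using tr' A' by blast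
  have hB: "h \<union> B = h' \<union> B'" using case_B[OF fin(1,3,4,6) a t1 t2 Q F1] .
  have hu: "h \<union> {a} = h' \<union> {a'}"
    by (rule mprod_inj[of "h \<union> {a}" "h' \<union> {a'}" L L']) (use fin t1 t2 Q in auto)
  have "h \<union> A = h' \<union> A'" using hu A(1) A'(1) by blast
  thus ?thesis using hB by blast
qed

lemma swap_choice:
  assumes "t \<in> A \<union> B"
  obtains A0 B0 where "(A0 = A \<and> B0 = B) \<or> (A0 = B \<and> B0 = A)" "t \<in> A0"
  using assms by blast

lemma GP:
  "finite h \<Longrightarrow> finite A \<Longrightarrow> finite B \<Longrightarrow> finite h' \<Longrightarrow> finite A' \<Longrightarrow> finite B' \<Longrightarrow>
   card A = 2 \<Longrightarrow> card B = 2 \<Longrightarrow> card A' = 2 \<Longrightarrow> card B' = 2 \<Longrightarrow>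
   h \<inter> A = {} \<Longrightarrow> h \<inter> B = {} \<Longrightarrow> A \<inter> B = {} \<Longrightarrow> h' \<inter> A' = {} \<Longrightarrow> h' \<inter> B' = {} \<Longrightarrow> A' \<inter> B' = {} \<Longrightarrow>
   \<forall>i\<in>h \<union> A \<union> B. trif L i \<Longrightarrow> \<forall>i\<in>h' \<union> A' \<union> B'. trif L' i \<Longrightarrow>
   (\<forall>x. pairf L h A B x = pairf L' h' A' B' x) \<Longrightarrow> {h \<union> A, h \<union> B} = {h' \<union> A', h' \<union> B'}"
proof (induction "card h" arbitrary: h A B h' A' B' L L' rule: less_induct)
  case (less h A B h' A' B' L L')
  note fh = less(2) and fA = less(3) and fB = less(4) and fh' = less(5) and fA' = less(6) and fB' = less(7)
    and cA = less(8) and cB = less(9) and cA' = less(10) and cB' = less(11)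
    and d1 = less(12) and d2 = less(13) and d3 = less(14) and d1' = less(15) and d2' = less(16) and d3' = less(17)
    and tr = less(18) and tr' = less(19) and eq = less(20)
  define t where "t = Max (h \<union> A \<union> B)"
  define t' where "t' = Max (h' \<union> A' \<union> B')"
  have Ane: "A \<noteq> {}" "B \<noteq> {}" "A' \<noteq> {}" "B' \<noteq> {}" using cA cB cA' cB' by auto
  have top: "hastop (pairf L h A B) t" using pairf_top[OF fh fA fB Ane(1,2) d1 d2 d3 tr] t_def by simp
  have top': "hastop (pairf L' h' A' B') t'" using pairf_top[OF fh' fA' fB' Ane(3,4) d1' d2' d3' tr'] t'_def by simp
  have "hastop (pairf L h A B) t'" using top' hastop_cong[of "pairf L h A B" "pairf L' h' A' B'" t'] eq by simp
  then have tt: "t' = t" using hastop_unique[OF top] by simp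
  have fin: "finite (h \<union> A \<union> B)" using fh fA fB by simp
  have ne: "h \<union> A \<union> B \<noteq> {}" using Ane by auto
  have tin: "t \<in> h \<union> A \<union> B" using Max_in[OF fin ne] t_def by simp
  have tle: "\<forall>i\<in>h \<union> A \<union> B. trif L i \<and> i \<le> t" using tr Max_ge[OF fin] t_def by blast
  have fin': "finite (h' \<union> A' \<union> B')" using fh' fA' fB' by simp
  have ne': "h' \<union> A' \<union> B' \<noteq> {}" using Ane by auto
  have tin': "t \<in> h' \<union> A' \<union> B'" using Max_in[OF fin' ne'] t'_def tt by simp
  have tle': "\<forall>i\<in>h' \<union> A' \<union> B'. trif L' i \<and> i \<le> t" using tr' Max_ge[OF fin'] t'_def tt by blast
  show ?case
  proof (cases "t \<in> h")
    case th: True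
    have ta: "t \<notin> A" "t \<notin> B" using th d1 d2 by auto
    show ?thesis
    proof (cases "t \<in> h'")
      case th': True
      have ta': "t \<notin> A'" "t \<notin> B'" using th' d1' d2' by auto
      have eq2: "\<forall>x. pairf L (h - {t}) A B x = pairf L' (h' - {t}) A' B' x"
      proof
        fix x
        have "pairf L (h - {t}) A B x = (pairf L h A B x \<noteq> pairf L h A B (tog t x))"
          using pairf_D_h[OF th ta tle] by simp
        also have "\<dots> = (pairf L' h' A' B' x \<noteq> pairf L' h' A' B' (tog t x))" using eq by simp
        also have "\<dots> = pairf L' (h' - {t}) A' B' x" using pairf_D_h[OF th' ta' tle'] by simp
        finally show "pairf L (h - {t}) A B x = pairf L' (h' - {t}) A' B' x" .
      qed
      have c: "card (h - {t}) < card h" using fh th by (rule card_Diff1_less)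
      have IH: "{(h - {t}) \<union> A, (h - {t}) \<union> B} = {(h' - {t}) \<union> A', (h' - {t}) \<union> B'}"
      proof -
        have p1: "finite (h - {t})" "finite (h' - {t})" using fh fh' by auto
        have p2: "(h - {t}) \<inter> A = {}" "(h - {t}) \<inter> B = {}" using d1 d2 by auto
        have p3: "(h' - {t}) \<inter> A' = {}" "(h' - {t}) \<inter> B' = {}" using d1' d2' by auto
        have p4: "\<forall>i\<in>(h - {t}) \<union> A \<union> B. trif L i" using tr by blast
        have p5: "\<forall>i\<in>(h' - {t}) \<union> A' \<union> B'. trif L' i" using tr' by blast
        show ?thesis by (rule less(1)[OF c p1(1) fA fB p1(2) fA' fB' cA cB cA' cB' p2 d3 p3 d3' p4 p5 eq2])
      qed
      have e1: "h \<union> A = insert t ((h - {t}) \<union> A)" "h \<union> B = insert t ((h - {t}) \<union> B)" using th by auto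
      have e2: "h' \<union> A' = insert t ((h' - {t}) \<union> A')" "h' \<union> B' = insert t ((h' - {t}) \<union> B')" using th' by auto
      have "insert t ` {(h - {t}) \<union> A, (h - {t}) \<union> B} = insert t ` {(h' - {t}) \<union> A', (h' - {t}) \<union> B'}"
        using IH by simp
      thus ?thesis using e1 e2 by simp
    next
      case th': False
      then have "t \<in> A' \<union> B'" using tin' by blast
      then obtain A0 B0 where AB: "(A0 = A' \<and> B0 = B') \<or> (A0 = B' \<and> B0 = A')" "t \<in> A0"
        by (rule swap_choice)
      have eq0: "\<forall>x. pairf L' h' A' B' x = pairf L' h' A0 B0 x"
      proof
        fix x show "pairf L' h' A' B' x = pairf L' h' A0 B0 x" using AB(1) pairf_swap[of L' h' A' B' x] by (elim disjE conjE) simp_all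
      qed
      have ta0: "t \<notin> h'" "t \<notin> B0" using th' AB d3' by auto
      have tle0: "\<forall>i\<in>h' \<union> A0 \<union> B0. trif L' i \<and> i \<le> t" using tle' AB(1) by blast
      have eq2: "\<forall>x. pairf L (h - {t}) A B x = mprod L' (h' \<union> (A0 - {t})) x"
      proof
        fix x
        have "pairf L (h - {t}) A B x = (pairf L h A B x \<noteq> pairf L h A B (tog t x))"
          using pairf_D_h[OF th ta tle] by simp
        also have "\<dots> = (pairf L' h' A0 B0 x \<noteq> pairf L' h' A0 B0 (tog t x))" using eq eq0 by simp
        also have "\<dots> = mprod L' (h' \<union> (A0 - {t})) x" using pairf_D_A[OF AB(2) ta0 tle0] by simp
        finally show "pairf L (h - {t}) A B x = mprod L' (h' \<union> (A0 - {t})) x" .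
      qed
      have q1: "finite (h' \<union> (A0 - {t}))" using fh' fA' fB' AB(1) by auto
      have q2: "\<forall>i\<in>h' \<union> (A0 - {t}). trif L' i" using tle0 by blast
      have q3: "finite (h - {t})" "(h - {t}) \<inter> A = {}" "(h - {t}) \<inter> B = {}"
        "\<forall>i\<in>(h - {t}) \<union> A \<union> B. trif L i" using fh d1 d2 tr by auto
      have False by (rule pair_mono[OF q3(1) fA fB q1 cA cB q3(2,3) d3 q3(4) q2 eq2])
      thus ?thesis by (rule FalseE)
    qed
  next
    case th: False
    then have "t \<in> A \<union> B" using tin by blast
    then obtain A0 B0 where AB: "(A0 = A \<and> B0 = B) \<or> (A0 = B \<and> B0 = A)" "t \<in> A0"
      by (rule swap_choice)
    have eq0: "\<forall>x. pairf L h A B x = pairf L h A0 B0 x"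
    proof
      fix x show "pairf L h A B x = pairf L h A0 B0 x" using AB(1) pairf_swap[of L h A B x] by (elim disjE conjE) simp_all
    qed
    have ta0: "t \<notin> h" "t \<notin> B0" using th AB d3 by auto
    have tle0: "\<forall>i\<in>h \<union> A0 \<union> B0. trif L i \<and> i \<le> t" using tle AB(1) by blast
    have set0: "{h \<union> A, h \<union> B} = {h \<union> A0, h \<union> B0}" using AB(1) by blast
    have fA0: "finite A0" "finite B0" "card A0 = 2" "card B0 = 2" "h \<inter> A0 = {}" "h \<inter> B0 = {}" "A0 \<inter> B0 = {}"
      using AB(1) fA fB cA cB d1 d2 d3 by auto
    show ?thesis
    proof (cases "t \<in> h'")
      case th': True
      have ta': "t \<notin> A'" "t \<notin> B'" using th' d1' d2' by auto
      have eq2: "\<forall>x. pairf L' (h' - {t}) A' B' x = mprod L (h \<union> (A0 - {t})) x"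
      proof
        fix x
        have "pairf L' (h' - {t}) A' B' x = (pairf L' h' A' B' x \<noteq> pairf L' h' A' B' (tog t x))"
          using pairf_D_h[OF th' ta' tle'] by simp
        also have "\<dots> = (pairf L h A0 B0 x \<noteq> pairf L h A0 B0 (tog t x))" using eq eq0 by simp
        also have "\<dots> = mprod L (h \<union> (A0 - {t})) x" using pairf_D_A[OF AB(2) ta0 tle0] by simp
        finally show "pairf L' (h' - {t}) A' B' x = mprod L (h \<union> (A0 - {t})) x" .
      qed
      have q1: "finite (h \<union> (A0 - {t}))" using fh fA0 by auto
      have q2: "\<forall>i\<in>h \<union> (A0 - {t}). trif L i" using tle0 by blast
      have q3: "finite (h' - {t})" "(h' - {t}) \<inter> A' = {}" "(h' - {t}) \<inter> B' = {}"
        "\<forall>i\<in>(h' - {t}) \<union> A' \<union> B'. trif L' i" using fh' d1' d2' tr' by auto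
      have False by (rule pair_mono[OF q3(1) fA' fB' q1 cA' cB' q3(2,3) d3' q3(4) q2 eq2])
      thus ?thesis by (rule FalseE)
    next
      case th': False
      then have "t \<in> A' \<union> B'" using tin' by blast
      then obtain A1 B1 where AB1: "(A1 = A' \<and> B1 = B') \<or> (A1 = B' \<and> B1 = A')" "t \<in> A1"
        by (rule swap_choice)
      have eq1: "\<forall>x. pairf L' h' A' B' x = pairf L' h' A1 B1 x"
      proof
        fix x show "pairf L' h' A' B' x = pairf L' h' A1 B1 x" using AB1(1) pairf_swap[of L' h' A' B' x] by (elim disjE conjE) simp_all
      qed
      have tle1: "\<forall>i\<in>h' \<union> A1 \<union> B1. trif L' i \<and> i \<le> t" using tle' AB1(1) by blast
      have set1: "{h' \<union> A', h' \<union> B'} = {h' \<union> A1, h' \<union> B1}" using AB1(1) by blast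
      have fA1: "finite A1" "finite B1" "card A1 = 2" "card B1 = 2" "h' \<inter> A1 = {}" "h' \<inter> B1 = {}" "A1 \<inter> B1 = {}"
        using AB1(1) fA' fB' cA' cB' d1' d2' d3' by auto
      have eqx: "\<forall>x. pairf L h A0 B0 x = pairf L' h' A1 B1 x" using eq eq0 eq1 by simp
      have "h \<union> A0 = h' \<union> A1 \<and> h \<union> B0 = h' \<union> B1"
        using GP_AA[OF fh fA0(1,2) fh' fA1(1,2) fA0(3) fA1(3) fA0(5,6,7) fA1(5,6,7) tle0 tle1 AB(2) AB1(2) eqx] .
      thus ?thesis using set0 set1 by simp
    qed
  qed
qed


section \<open>Bridge to the polynomial representation\<close>

definition ev :: "rpoly \<Rightarrow> nat set \<Rightarrow> bool" where
  "ev p x \<longleftrightarrow> odd (card {a \<in> p. a \<subseteq> x})"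

lemma fin_padd: "finite p \<Longrightarrow> finite q \<Longrightarrow> finite (padd p q)"
  unfolding padd_def by simp

lemma fin_pmul:
  assumes "finite p" "finite q"
  shows "finite (pmul p q)"
proof -
  have "pmul p q \<subseteq> (\<lambda>(a, b). a \<union> b) ` (p \<times> q)"
  proof
    fix u assume "u \<in> pmul p q"
    then have o: "odd (card {(a, b). a \<in> p \<and> b \<in> q \<and> a \<union> b = u})" unfolding pmul_def by simp
    have "card {(a, b). a \<in> p \<and> b \<in> q \<and> a \<union> b = u} \<noteq> 0"
    proof
      assume "card {(a, b). a \<in> p \<and> b \<in> q \<and> a \<union> b = u} = 0"
      thus False using o by simp
    qed
    then have "{(a, b). a \<in> p \<and> b \<in> q \<and> a \<union> b = u} \<noteq> {}" by (intro notI) simp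
    then obtain a b where ab: "a \<in> p" "b \<in> q" "a \<union> b = u" by blast
    show "u \<in> (\<lambda>(a, b). a \<union> b) ` (p \<times> q)"
      by (rule image_eqI[where x="(a, b)"]) (use ab in simp_all)
  qed
  moreover have "finite ((\<lambda>(a, b). a \<union> b) ` (p \<times> q))" using assms by simp
  ultimately show ?thesis by (rule finite_subset)
qed

lemma ev_padd:
  assumes "finite p" "finite q"
  shows "ev (padd p q) x = (ev p x \<noteq> ev q x)"
proof -
  define P where "P = {a \<in> p. a \<subseteq> x}"
  define Q where "Q = {a \<in> q. a \<subseteq> x}"
  have fP: "finite P" "finite Q" using assms P_def Q_def by auto
  have e: "{a \<in> padd p q. a \<subseteq> x} = (P - Q) \<union> (Q - P)" unfolding padd_def P_def Q_def by auto
  have c1: "card ((P - Q) \<union> (Q - P)) = card (P - Q) + card (Q - P)"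
    by (rule card_Un_disjoint) (use fP in auto)
  have c2: "card P = card (P - Q) + card (P \<inter> Q)"
  proof -
    have "P = (P - Q) \<union> (P \<inter> Q)" by blast
    then have "card P = card ((P - Q) \<union> (P \<inter> Q))" by simp
    also have "\<dots> = card (P - Q) + card (P \<inter> Q)" by (rule card_Un_disjoint) (use fP in auto)
    finally show ?thesis .
  qed
  have c3: "card Q = card (Q - P) + card (P \<inter> Q)"
  proof -
    have "Q = (Q - P) \<union> (P \<inter> Q)" by blast
    then have "card Q = card ((Q - P) \<union> (P \<inter> Q))" by simp
    also have "\<dots> = card (Q - P) + card (P \<inter> Q)" by (rule card_Un_disjoint) (use fP in auto)
    finally show ?thesis .
  qed
  have "ev (padd p q) x = odd (card (P - Q) + card (Q - P))" unfolding ev_def e c1 ..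
  moreover have "ev p x = odd (card (P - Q) + card (P \<inter> Q))" unfolding ev_def P_def[symmetric] c2 ..
  moreover have "ev q x = odd (card (Q - P) + card (P \<inter> Q))" unfolding ev_def Q_def[symmetric] c3 ..
  ultimately show ?thesis by auto
qed

lemma parity_sum:
  "finite W \<Longrightarrow> even (sum (N :: 'a \<Rightarrow> nat) W) = even (card {u \<in> W. odd (N u)})"
proof (induction W rule: finite_induct)
  case empty thus ?case by simp
next
  case (insert w W)
  have "{u \<in> insert w W. odd (N u)} = (if odd (N w) then insert w {u \<in> W. odd (N u)} else {u \<in> W. odd (N u)})"
    by auto
  moreover have "finite {u \<in> W. odd (N u)}" using insert by simp
  moreover have "w \<notin> {u \<in> W. odd (N u)}" using insert by simp
  ultimately show ?case using insert by auto
qed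

lemma ev_pmul:
  assumes fp: "finite p" and fq: "finite q"
  shows "ev (pmul p q) x = (ev p x \<and> ev q x)"
proof -
  define P where "P = {a \<in> p. a \<subseteq> x}"
  define Q where "Q = {a \<in> q. a \<subseteq> x}"
  define S where "S = P \<times> Q"
  define \<phi> where "\<phi> = (\<lambda>s :: nat set \<times> nat set. fst s \<union> snd s)"
  define W where "W = \<phi> ` S"
  define N where "N = (\<lambda>u. card {(a, b). a \<in> p \<and> b \<in> q \<and> a \<union> b = u})"
  have fP: "finite P" "finite Q" using fp fq P_def Q_def by auto
  have fS: "finite S" using fP S_def by simp
  have fW: "finite W" using fS W_def by simp
  have Nfib: "{s \<in> S. \<phi> s = u} = {(a, b). a \<in> p \<and> b \<in> q \<and> a \<union> b = u}" if "u \<in> W" for u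
  proof -
    have ux: "u \<subseteq> x" using that unfolding W_def S_def P_def Q_def \<phi>_def by auto
    show ?thesis unfolding S_def P_def Q_def \<phi>_def using ux by auto
  qed
  have "S = (\<Union>u\<in>W. {s \<in> S. \<phi> s = u})" unfolding W_def by auto
  then have "card S = (\<Sum>u\<in>W. card {s \<in> S. \<phi> s = u})"
    using card_UN_disjoint[OF fW, of "\<lambda>u. {s \<in> S. \<phi> s = u}"] fS by auto
  also have "\<dots> = (\<Sum>u\<in>W. N u)" using Nfib N_def by simp
  finally have cS: "card S = sum N W" .
  have e: "{u \<in> pmul p q. u \<subseteq> x} = {u \<in> W. odd (N u)}"
  proof
    show "{u \<in> pmul p q. u \<subseteq> x} \<subseteq> {u \<in> W. odd (N u)}"
    proof
      fix u assume u: "u \<in> {u \<in> pmul p q. u \<subseteq> x}"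
      then have o: "odd (N u)" unfolding pmul_def N_def by auto
      then have "N u \<noteq> 0" by presburger
      then have "{(a, b). a \<in> p \<and> b \<in> q \<and> a \<union> b = u} \<noteq> {}" unfolding N_def by (metis card.empty)
      then obtain a b where ab: "a \<in> p" "b \<in> q" "a \<union> b = u" by blast
      then have "(a, b) \<in> S" using u unfolding S_def P_def Q_def by auto
      then have "u \<in> W" unfolding W_def \<phi>_def using ab by force
      thus "u \<in> {u \<in> W. odd (N u)}" using o by simp
    qed
  next
    show "{u \<in> W. odd (N u)} \<subseteq> {u \<in> pmul p q. u \<subseteq> x}"
    proof
      fix u assume u: "u \<in> {u \<in> W. odd (N u)}"
      then have "u \<subseteq> x" unfolding W_def S_def P_def Q_def \<phi>_def by auto
      moreover have "u \<in> pmul p q" using u unfolding pmul_def N_def by simp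
      ultimately show "u \<in> {u \<in> pmul p q. u \<subseteq> x}" by simp
    qed
  qed
  have "ev (pmul p q) x = odd (card {u \<in> W. odd (N u)})" unfolding ev_def e ..
  also have "\<dots> = odd (sum N W)" using parity_sum[OF fW, of N] by simp
  also have "\<dots> = odd (card P * card Q)"
  proof -
    have "sum N W = card P * card Q" using cS unfolding S_def card_cartesian_product by simp
    thus ?thesis by simp
  qed
  also have "\<dots> = (ev p x \<and> ev q x)" unfolding ev_def P_def Q_def by simp
  finally show ?thesis .
qed

lemma ev_pone: "ev pone x"
proof -
  have "{a \<in> pone. a \<subseteq> x} = {{}}" unfolding pone_def by auto
  thus ?thesis unfolding ev_def by simp
qed

lemma ev_pvar: "ev (pvar i) x = (i \<in> x)"
proof -
  have "{a \<in> pvar i. a \<subseteq> x} = (if i \<in> x then {{i}} else {})" unfolding pvar_def by auto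
  thus ?thesis unfolding ev_def by simp
qed

lemma ev_empty: "\<not> ev {} x" unfolding ev_def by simp

lemma fold_padd:
  "finite (foldr padd (map pvar js) {}) \<and>
   ev (foldr padd (map pvar js) {}) x = foldr (\<lambda>j b. (j \<in> x) \<noteq> b) js False"
proof (induction js)
  case Nil thus ?case using ev_empty by simp
next
  case (Cons j js)
  have fv: "finite (pvar j)" unfolding pvar_def by simp
  show ?case using Cons fin_padd[OF fv] ev_padd[OF fv, of _ x] ev_pvar by simp
qed

lemma foldr_cong_x:
  "(\<forall>j\<in>set js. (j \<in> x) = (j \<in> y)) \<Longrightarrow>
   foldr (\<lambda>j b. (j \<in> x) \<noteq> b) js False = foldr (\<lambda>j b. (j \<in> y) \<noteq> b) js False"
  by (induction js) auto

definition linb :: "(nat \<Rightarrow> nat \<Rightarrow> bool) \<Rightarrow> (nat \<Rightarrow> bool) \<Rightarrow> nat \<Rightarrow> nat set \<Rightarrow> bool" where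
  "linb B e i y = (foldr (\<lambda>j b. (j \<in> y) \<noteq> b) (filter (\<lambda>j. B i j) [0..<i]) False \<noteq> e i)"

lemma lin_img_fin_ev:
  "finite (lin_img B e i) \<and> ev (lin_img B e i) x = ((i \<in> x) \<noteq> linb B e i x)"
proof -
  define F where "F = foldr padd (map pvar (filter (\<lambda>j. B i j) [0..<i])) {}"
  have fF: "finite F" and eF: "ev F x = foldr (\<lambda>j b. (j \<in> x) \<noteq> b) (filter (\<lambda>j. B i j) [0..<i]) False"
    using fold_padd F_def by auto
  define E where "E = (if e i then pone else {})"
  have fE: "finite E" unfolding E_def pone_def by simp
  have eE: "ev E x = e i" unfolding E_def using ev_pone ev_empty by simp
  have fv: "finite (pvar i)" unfolding pvar_def by simp
  have "lin_img B e i = padd (pvar i) (padd F E)" unfolding lin_img_def F_def E_def by simp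
  moreover have "finite (padd F E)" using fF fE by (rule fin_padd)
  ultimately show ?thesis
    using fin_padd[OF fv] ev_padd[OF fv, of _ x] ev_padd[OF fF fE, of x] eF eE ev_pvar linb_def by simp
qed

lemma linb_low: "linb B e i x = linb B e i (x \<inter> {..<i})"
  unfolding linb_def by (subst foldr_cong_x[of _ x "x \<inter> {..<i}"]) auto

lemma trif_lin: "trif (\<lambda>i x. ev (lin_img B e i) x) i"
  unfolding trif_def
proof (intro exI allI)
  fix x
  show "ev (lin_img B e i) x = ((i \<in> x) \<noteq> linb B e i (x \<inter> {..<i}))"
    using lin_img_fin_ev[of B e i x] linb_low[of B e i x] by simp
qed

lemma fold_pmul:
  assumes "\<forall>a\<in>set xs. finite (F a)"
  shows "finite (foldr pmul (map F xs) pone) \<and> ev (foldr pmul (map F xs) pone) x = (\<forall>a\<in>set xs. ev (F a) x)"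
  using assms
proof (induction xs)
  case Nil thus ?case using ev_pone unfolding pone_def by simp
next
  case (Cons a xs)
  then have fa: "finite (F a)" and IH: "finite (foldr pmul (map F xs) pone)"
    "ev (foldr pmul (map F xs) pone) x = (\<forall>a\<in>set xs. ev (F a) x)" by auto
  show ?case using fin_pmul[OF fa IH(1)] ev_pmul[OF fa IH(1)] IH(2) by simp
qed

lemma act_ev:
  assumes "finite u"
  shows "finite (act Be u) \<and> ev (act Be u) x = (\<forall>i\<in>u. ev (lin_img (fst Be) (snd Be) i) x)"
proof -
  have "\<forall>a\<in>set (sorted_list_of_set u). finite (lin_img (fst Be) (snd Be) a)"
    using lin_img_fin_ev by blast
  from fold_pmul[OF this, of x] show ?thesis unfolding act_def using assms by simp
qed

lemma pair_ev:
  assumes ff: "finite f" and fg: "finite g" and P: "P \<in> pair_set m f g"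
  shows "\<exists>L. (\<forall>i. trif L i) \<and> (\<forall>x. ev P x = pairf L (f \<inter> g) (f - f \<inter> g) (g - f \<inter> g) x)"
proof -
  define h where "h = f \<inter> g"
  obtain Be1 Be2 Be3 where P': "P = pmul (act Be1 h) (padd (act Be2 (f - h)) (act Be3 (g - h)))"
    using P unfolding pair_set_def Let_def set_mul_def set_add_def orbit_def h_def by blast
  define Lin where "Lin = (\<lambda>Be i x. ev (lin_img (fst Be) (snd Be) i) x)"
  define L where "L = (\<lambda>i. if i \<in> h then Lin Be1 i else if i \<in> f - h then Lin Be2 i else Lin Be3 i)"
  have tr: "\<forall>i. trif L i"
  proof
    fix i
    define Be where "Be = (if i \<in> h then Be1 else if i \<in> f - h then Be2 else Be3)"
    have "L i = Lin Be i" unfolding L_def Be_def by simp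
    moreover have "trif (Lin Be) i" unfolding Lin_def using trif_lin[of "fst Be" "snd Be" i] by simp
    ultimately show "trif L i" using trif_cong[of L i "Lin Be"] by simp
  qed
  have fh: "finite h" "finite (f - h)" "finite (g - h)" using ff fg h_def by auto
  have a1: "finite (act Be1 h)" "\<And>x. ev (act Be1 h) x = (\<forall>i\<in>h. Lin Be1 i x)"
    using act_ev[OF fh(1)] Lin_def by auto
  have a2: "finite (act Be2 (f - h))" "\<And>x. ev (act Be2 (f - h)) x = (\<forall>i\<in>f - h. Lin Be2 i x)"
    using act_ev[OF fh(2)] Lin_def by auto
  have a3: "finite (act Be3 (g - h))" "\<And>x. ev (act Be3 (g - h)) x = (\<forall>i\<in>g - h. Lin Be3 i x)"
    using act_ev[OF fh(3)] Lin_def by auto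
  have m1: "\<And>x. mprod L h x = (\<forall>i\<in>h. Lin Be1 i x)" unfolding mprod_def L_def by simp
  have m2: "\<And>x. mprod L (f - h) x = (\<forall>i\<in>f - h. Lin Be2 i x)" unfolding mprod_def L_def by simp
  have m3: "\<And>x. mprod L (g - h) x = (\<forall>i\<in>g - h. Lin Be3 i x)" unfolding mprod_def L_def h_def by auto
  have "\<forall>x. ev P x = pairf L h (f - h) (g - h) x"
  proof
    fix x
    have "ev P x = (ev (act Be1 h) x \<and> (ev (act Be2 (f - h)) x \<noteq> ev (act Be3 (g - h)) x))"
      unfolding P' using ev_pmul[OF a1(1) fin_padd[OF a2(1) a3(1)]] ev_padd[OF a2(1) a3(1)] by simp
    thus "ev P x = pairf L h (f - h) (g - h) x" unfolding pairf_def using a1 a2 a3 m1 m2 m3 by simp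
  qed
  thus ?thesis using tr h_def by blast
qed


lemma card_two:
  assumes "finite f" "card f = r" "card (f \<inter> g) = r - 2" "r \<ge> 2"
  shows "card (f - f \<inter> g) = 2"
proof -
  have "card (f - f \<inter> g) = card f - card (f \<inter> g)"
    by (rule card_Diff_subset) (use assms(1) in auto)
  thus ?thesis using assms by simp
qed

theorem proposition2:
  fixes m r :: nat and I :: "nat set set" and f g f' g' :: "nat set"
  assumes "m \<ge> 1"
    and "decreasing m I"
    and "I \<noteq> {}"
    and "r = Max (card ` I)"
    and "f \<in> layer I r" and "g \<in> layer I r"
    and "f' \<in> layer I r" and "g' \<in> layer I r"
    and "{f, g} \<noteq> {f', g'}"
    and "int (card (f \<inter> g)) = int r - 2"
    and "int (card (f' \<inter> g')) = int r - 2"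
  shows "pair_set m f g \<inter> pair_set m f' g' = {}"
proof (rule ccontr)
  assume "pair_set m f g \<inter> pair_set m f' g' \<noteq> {}"
  then obtain P where P1: "P \<in> pair_set m f g" and P2: "P \<in> pair_set m f' g'" by blast
  have Isub: "I \<subseteq> Pow {..<m}" using assms(2) unfolding decreasing_def monomials_def by blast
  have mem: "f \<in> I" "g \<in> I" "f' \<in> I" "g' \<in> I" "card f = r" "card g = r" "card f' = r" "card g' = r"
    using assms(5-8) unfolding layer_def by auto
  have fin: "finite f" "finite g" "finite f'" "finite g'"
    using mem(1-4) Isub by (auto intro: finite_subset[of _ "{..<m}"])
  have r2: "r \<ge> 2" using assms(10) by linarith
  have ci: "card (f \<inter> g) = r - 2" "card (f' \<inter> g') = r - 2" using assms(10,11) r2 by linarith+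
  have ci2: "card (g \<inter> f) = r - 2" "card (g' \<inter> f') = r - 2" using ci by (simp_all add: Int_commute)
  obtain L where L: "\<forall>i. trif L i" "\<forall>x. ev P x = pairf L (f \<inter> g) (f - f \<inter> g) (g - f \<inter> g) x"
    using pair_ev[OF fin(1,2) P1] by blast
  obtain L' where L': "\<forall>i. trif L' i" "\<forall>x. ev P x = pairf L' (f' \<inter> g') (f' - f' \<inter> g') (g' - f' \<inter> g') x"
    using pair_ev[OF fin(3,4) P2] by blast
  have cA: "card (f - f \<inter> g) = 2" using card_two[OF fin(1) mem(5) ci(1) r2] .
  have cB: "card (g - f \<inter> g) = 2" using card_two[OF fin(2) mem(6) ci2(1) r2] by (simp add: Int_commute)
  have cA': "card (f' - f' \<inter> g') = 2" using card_two[OF fin(3) mem(7) ci(2) r2] .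
  have cB': "card (g' - f' \<inter> g') = 2" using card_two[OF fin(4) mem(8) ci2(2) r2] by (simp add: Int_commute)
  have eq: "\<forall>x. pairf L (f \<inter> g) (f - f \<inter> g) (g - f \<inter> g) x = pairf L' (f' \<inter> g') (f' - f' \<inter> g') (g' - f' \<inter> g') x"
    using L(2) L'(2) by simp
  have "{(f \<inter> g) \<union> (f - f \<inter> g), (f \<inter> g) \<union> (g - f \<inter> g)} = {(f' \<inter> g') \<union> (f' - f' \<inter> g'), (f' \<inter> g') \<union> (g' - f' \<inter> g')}"
    by (rule GP[OF _ _ _ _ _ _ cA cB cA' cB' _ _ _ _ _ _ _ _ eq]) (use fin L(1) L'(1) in auto)
  moreover have "(f \<inter> g) \<union> (f - f \<inter> g) = f" "(f \<inter> g) \<union> (g - f \<inter> g) = g"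
    "(f' \<inter> g') \<union> (f' - f' \<inter> g') = f'" "(f' \<inter> g') \<union> (g' - f' \<inter> g') = g'" by auto
  ultimately show False using assms(9) by simp
qed

end
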